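(* Let $f:\mathbb{R}^n\times\mathbb{R}^m\to\mathbb{R}$ be twice continuously differentiable, $\mu$-strongly convex in $x$ and $\mu$-strongly concave in $y$ ($\mu>0$), with $\|\nabla F(z)\|\le L$ for all $z$ and $\nabla F$ being $L_2$-Lipschitz, where $F(z)=(\nabla_x f(x,y);-\nabla_y f(x,y))$, $z=(x;y)$. Let $m(z)=\frac12\|F(z)\|^2$. Fix a point $z^k=(x^k;y^k)$, let $g^k=\nabla f(z^k)$, $H^k=\nabla^2 f(z^k)$, and for $\gamma>0$ define $$f_k(x,y;\gamma)=f(z^k)+\langle g^k,z-z^k\rangle+\tfrac12(z-z^k)^\top H^k(z-z^k)+\tfrac{\gamma}{3}\|x-x^k\|^3-\tfrac{\gamma}{3}\|y-y^k\|^3.$$ Let $(\tilde x,\tilde y)$ be the saddle point of $\min_x\max_y f_k(x,y;\gamma)$ and set $u^k=\tilde x-x^k$, $v^k=\tilde y-y^k$, $d^k=(u^k;v^k)$. Then, if $\gamma=\gamma^k>0$ is chosen small enough, $\gamma^k(\|u^k\|+\|v^k\|)<\mu$, and consequently $d^k$ is a descent direction for $m$ at $z^k$: $$\langle\nabla m(z^k),d^k\rangle\le-\frac{\mu^2}{2}\|d^k\|^2.$$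
   Context: $\|\cdot\|$ is the Euclidean norm for vectors and the largest singular value for matrices. The saddle point $(\tilde x,\tilde y)$ is characterized by the first-order conditions $g_x^k+H_{xx}^ku^k+\gamma\|u^k\|u^k+H_{xy}^kv^k=0$ and $g_y^k+H_{yy}^kv^k-\gamma\|v^k\|v^k+(H_{xy}^k)^\top u^k=0$, where $g^k=(g^k_x;g^k_y)$ and $H^k$ has blocks $H^k_{xx},H^k_{xy},H^k_{yy}$. *)

theory Defs
  imports "HOL-Analysis.Analysis"
begin

definition strongly_convex :: "real \<Rightarrow> ('a::real_normed_vector \<Rightarrow> real) \<Rightarrow> bool" where
  "strongly_convex \<mu> g \<longleftrightarrow>
     (\<forall>x1 x2 t. 0 \<le> t \<and> t \<le> 1 \<longrightarrow>
        g ((1 - t) *\<^sub>R x1 + t *\<^sub>R x2)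
          \<le> (1 - t) * g x1 + t * g x2 - \<mu> / 2 * t * (1 - t) * (norm (x1 - x2))\<^sup>2)"

definition opF :: "('a \<times> 'b \<Rightarrow> 'a \<times> 'b) \<Rightarrow> 'a \<times> 'b \<Rightarrow> 'a::real_normed_vector \<times> 'b::real_normed_vector" where
  "opF gf z = (fst (gf z), - snd (gf z))"

definition cubic_model ::
  "(('a::euclidean_space) \<times> ('b::euclidean_space) \<Rightarrow> real) \<Rightarrow> ('a \<times> 'b \<Rightarrow> 'a \<times> 'b)
     \<Rightarrow> ('a \<times> 'b \<Rightarrow> 'a \<times> 'b) \<Rightarrow> 'a \<times> 'b \<Rightarrow> real \<Rightarrow> 'a \<Rightarrow> 'b \<Rightarrow> real" where
  "cubic_model f gf H zk \<gamma> x y =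
     (let d = (x - fst zk, y - snd zk) in
       f zk + inner (gf zk) d + 1/2 * inner d (H d)
       + \<gamma> / 3 * norm (x - fst zk) ^ 3 - \<gamma> / 3 * norm (y - snd zk) ^ 3)"

definition saddle_point :: "('a \<Rightarrow> 'b \<Rightarrow> real) \<Rightarrow> 'a \<Rightarrow> 'b \<Rightarrow> bool" where
  "saddle_point \<phi> xt yt \<longleftrightarrow> (\<forall>x y. \<phi> xt y \<le> \<phi> xt yt \<and> \<phi> xt yt \<le> \<phi> x yt)"

end

theory Submission
  imports Defs
begin


lemma sc_first_order:
  fixes G :: "'a::real_inner \<Rightarrow> real"
  assumes sc: "strongly_convex \<mu> G" and d: "(G has_derivative (\<lambda>h. inner D h)) (at x)"
  shows "G x + inner D (x' - x) + \<mu>/2 * (norm (x' - x))^2 \<le> G x'"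
proof -
  let ?p = "\<lambda>s. G (x + s *\<^sub>R (x' - x))"
  have "((\<lambda>s. x + s *\<^sub>R (x'-x)) has_derivative (\<lambda>s. s *\<^sub>R (x'-x))) (at 0)"
    by (intro derivative_eq_intros) auto
  moreover have "(G has_derivative (\<lambda>h. inner D h)) (at (x + 0 *\<^sub>R (x'-x)))" using d by simp
  ultimately have "(?p has_derivative (\<lambda>s. inner D (s *\<^sub>R (x'-x)))) (at 0)"
    by (rule has_derivative_compose)
  moreover have "(\<lambda>s. inner D (s *\<^sub>R (x'-x))) = (*) (inner D (x'-x))"
    by (simp add: fun_eq_iff mult.commute)
  ultimately have "(?p has_real_derivative inner D (x'-x)) (at 0)"
    unfolding has_field_derivative_def by simp
  then have dr: "(?p has_real_derivative inner D (x'-x)) (at_right 0)"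
    by (rule has_field_derivative_at_within)
  have lim: "((\<lambda>s. (?p s - ?p 0)/(s - 0)) \<longlongrightarrow> inner D (x'-x)) (at_right 0)"
    using has_field_derivative_iff[THEN iffD1, OF dr] by simp
  have lim2: "((\<lambda>s. G x' - G x - \<mu>/2*(1-s)*norm(x'-x)^2) \<longlongrightarrow> G x' - G x - \<mu>/2*(1-0)*norm(x'-x)^2) (at_right 0)"
    by (intro tendsto_intros)
  have ev: "eventually (\<lambda>s. (?p s - ?p 0)/(s-0) \<le> G x' - G x - \<mu>/2*(1-s)*norm(x'-x)^2) (at_right (0::real))"
    unfolding eventually_at_right_field
  proof (intro exI[of _ 1] conjI allI impI)
    fix s :: real assume s: "0 < s" "s < 1"
    have "G ((1 - s) *\<^sub>R x + s *\<^sub>R x') \<le> (1 - s) * G x + s * G x' - \<mu> / 2 * s * (1 - s) * (norm (x - x'))\<^sup>2"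
      using sc s unfolding strongly_convex_def by auto
    moreover have "(1 - s) *\<^sub>R x + s *\<^sub>R x' = x + s *\<^sub>R (x'-x)" by (simp add: algebra_simps)
    moreover have "norm (x - x') = norm (x' - x)" by (simp add: norm_minus_commute)
    ultimately have "?p s - ?p 0 \<le> s * (G x' - G x - \<mu>/2*(1-s)*norm(x'-x)^2)"
      by (simp add: algebra_simps)
    then show "(?p s - ?p 0)/(s-0) \<le> G x' - G x - \<mu>/2*(1-s)*norm(x'-x)^2"
      using s by (simp add: divide_le_eq mult.commute)
  qed simp
  have "inner D (x'-x) \<le> G x' - G x - \<mu>/2*(1-0)*norm(x'-x)^2"
    using tendsto_le[OF trivial_limit_at_right_real lim2 lim ev] .
  then show ?thesis by simp
qed

lemma sc_monotone:
  fixes G :: "'a::real_inner \<Rightarrow> real"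
  assumes sc: "strongly_convex \<mu> G" and d: "\<And>x. (G has_derivative (\<lambda>h. inner (D x) h)) (at x)"
  shows "\<mu> * (norm (x - x'))^2 \<le> inner (D x - D x') (x - x')"
proof -
  have 1: "G x + inner (D x) (x' - x) + \<mu>/2 * (norm (x' - x))^2 \<le> G x'"
    by (rule sc_first_order[OF sc d])
  have 2: "G x' + inner (D x') (x - x') + \<mu>/2 * (norm (x - x'))^2 \<le> G x"
    by (rule sc_first_order[OF sc d])
  have 3: "norm (x' - x) = norm (x - x')" by (simp add: norm_minus_commute)
  have 4: "inner (D x - D x') (x - x') = - inner (D x) (x' - x) - inner (D x') (x - x')"
    by (simp add: inner_diff_left inner_diff_right)
  show ?thesis using 1 2 3 4 by simp
qed

lemma sc_second:
  fixes G :: "'a::real_inner \<Rightarrow> real"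
  assumes sc: "strongly_convex \<mu> G" and d: "\<And>x. (G has_derivative (\<lambda>h. inner (D x) h)) (at x)"
    and d2: "(D has_derivative D2) (at x)"
  shows "\<mu> * (norm h)^2 \<le> inner (D2 h) h"
proof -
  interpret L: bounded_linear D2 using d2 by (rule has_derivative_bounded_linear)
  let ?q = "\<lambda>s. inner (D (x + s *\<^sub>R h)) h"
  have "((\<lambda>s. x + s *\<^sub>R h) has_derivative (\<lambda>s. s *\<^sub>R h)) (at 0)"
    by (intro derivative_eq_intros) auto
  moreover have "(D has_derivative D2) (at (x + 0 *\<^sub>R h))" using d2 by simp
  ultimately have "((\<lambda>s. D (x + s *\<^sub>R h)) has_derivative (\<lambda>s. D2 (s *\<^sub>R h))) (at 0)"
    by (rule has_derivative_compose)
  then have "(?q has_derivative (\<lambda>s. inner (D2 (s *\<^sub>R h)) h)) (at 0)"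
    by (rule bounded_linear.has_derivative[OF bounded_linear_inner_left])
  moreover have "(\<lambda>s. inner (D2 (s *\<^sub>R h)) h) = (*) (inner (D2 h) h)"
    by (simp add: fun_eq_iff L.scaleR mult.commute)
  ultimately have "(?q has_real_derivative inner (D2 h) h) (at 0)"
    unfolding has_field_derivative_def by simp
  then have dr: "(?q has_real_derivative inner (D2 h) h) (at_right 0)"
    by (rule has_field_derivative_at_within)
  have lim: "((\<lambda>s. (?q s - ?q 0)/(s - 0)) \<longlongrightarrow> inner (D2 h) h) (at_right 0)"
    using has_field_derivative_iff[THEN iffD1, OF dr] by simp
  have ev: "eventually (\<lambda>s. \<mu> * (norm h)^2 \<le> (?q s - ?q 0)/(s-0)) (at_right (0::real))"
    unfolding eventually_at_right_field
  proof (intro exI[of _ 1] conjI allI impI)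
    fix s :: real assume s: "0 < s" "s < 1"
    have "\<mu> * (norm ((x + s *\<^sub>R h) - x))^2 \<le> inner (D (x + s *\<^sub>R h) - D x) ((x + s *\<^sub>R h) - x)"
      by (rule sc_monotone[OF sc d])
    then have "\<mu> * (s^2 * (norm h)^2) \<le> s * (?q s - ?q 0)"
      using s by (simp add: inner_diff_left power_mult_distrib algebra_simps)
    then have "s * (s * (\<mu> * (norm h)^2)) \<le> s * (?q s - ?q 0)"
      by (simp add: power2_eq_square algebra_simps)
    then have "s * (\<mu> * (norm h)^2) \<le> ?q s - ?q 0"
      using s mult_le_cancel_left_pos by blast
    then show "\<mu> * (norm h)^2 \<le> (?q s - ?q 0)/(s-0)"
      using s by (simp add: pos_le_divide_eq mult.commute)
  qed simp
  show ?thesis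
    using tendsto_le[OF trivial_limit_at_right_real lim tendsto_const ev] .
qed

lemma line_deriv:
  fixes f :: "'a::real_inner \<Rightarrow> real"
  assumes grad: "\<And>z. (f has_derivative (\<lambda>h. inner (gf z) h)) (at z)"
  shows "((\<lambda>s. f (p + s *\<^sub>R h)) has_real_derivative inner (gf (p + s *\<^sub>R h)) h) (at s)"
proof -
  have "((\<lambda>s. p + s *\<^sub>R h) has_derivative (\<lambda>s. s *\<^sub>R h)) (at s)"
    by (intro derivative_eq_intros) auto
  then have "((\<lambda>s. f (p + s *\<^sub>R h)) has_derivative (\<lambda>r. inner (gf (p + s *\<^sub>R h)) (r *\<^sub>R h))) (at s)"
    by (rule has_derivative_compose) (rule grad)
  moreover have "(\<lambda>r. inner (gf (p + s *\<^sub>R h)) (r *\<^sub>R h)) = (*) (inner (gf (p + s *\<^sub>R h)) h)"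
    by (simp add: fun_eq_iff mult.commute)
  ultimately show ?thesis unfolding has_field_derivative_def by simp
qed

lemma hess_sym_aux:
  fixes f :: "'a::real_inner \<Rightarrow> real"
  assumes grad: "\<And>z. (f has_derivative (\<lambda>h. inner (gf z) h)) (at z)"
    and hess: "(gf has_derivative H) (at a)"
    and e: "e > 0"
  shows "\<exists>\<delta>>0. \<forall>t. 0<t \<and> t<\<delta> \<longrightarrow>
     \<bar>f (a + t *\<^sub>R k + t *\<^sub>R h) - f (a + t *\<^sub>R h) - f (a + t *\<^sub>R k) + f a - t^2 * inner (H k) h\<bar>
       \<le> e * (norm h * (2*norm h + norm k)) * t^2"
proof -
  interpret L: bounded_linear H using hess by (rule has_derivative_bounded_linear)
  obtain d where d: "d > 0" and dd: "\<And>y. norm (y - a) < d \<Longrightarrow> norm (gf y - gf a - H (y - a)) \<le> e * norm (y - a)"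
    using hess e unfolding has_derivative_within_alt by blast
  define \<delta> where "\<delta> = d / (norm h + norm k + 1)"
  have \<delta>: "\<delta> > 0" using d by (simp add: \<delta>_def add_nonneg_pos)
  show ?thesis
  proof (intro exI[of _ \<delta>] conjI allI impI \<delta>)
    fix t :: real assume t: "0 < t \<and> t < \<delta>"
    have td: "t * (norm h + norm k) < d"
    proof -
      have "t * (norm h + norm k) \<le> t * (norm h + norm k + 1)" using t by simp
      also have "\<dots> < \<delta> * (norm h + norm k + 1)"
        using t by (intro mult_strict_right_mono) (auto simp: add_nonneg_pos)
      also have "\<dots> = d"
      proof -
        have "norm h + norm k + 1 > 0" by (simp add: add_nonneg_pos)
        then show ?thesis unfolding \<delta>_def by simp
      qed
      finally show ?thesis .
    qed
    define \<phi> where "\<phi> = (\<lambda>s. f ((a + t *\<^sub>R k) + s *\<^sub>R h) - f (a + s *\<^sub>R h))"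
    have der: "\<And>s. (\<phi> has_real_derivative (inner (gf ((a + t *\<^sub>R k) + s *\<^sub>R h)) h - inner (gf (a + s *\<^sub>R h)) h)) (at s)"
      unfolding \<phi>_def by (intro DERIV_diff line_deriv grad)
    obtain \<xi> where xi: "0 < \<xi>" "\<xi> < t"
      and mv: "\<phi> t - \<phi> 0 = (t - 0) * (inner (gf ((a + t *\<^sub>R k) + \<xi> *\<^sub>R h)) h - inner (gf (a + \<xi> *\<^sub>R h)) h)"
      using MVT2[of 0 t \<phi>, OF _ der] t by blast
    define y1 where "y1 = (a + t *\<^sub>R k) + \<xi> *\<^sub>R h"
    define y2 where "y2 = a + \<xi> *\<^sub>R h"
    have n1: "norm (y1 - a) \<le> t * (norm h + norm k)"
    proof -
      have "norm (y1 - a) = norm (t *\<^sub>R k + \<xi> *\<^sub>R h)" unfolding y1_def by (simp add: algebra_simps)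
      also have "\<dots> \<le> t * norm k + \<xi> * norm h"
        using xi t by (metis (no_types, lifting) abs_of_pos norm_scaleR norm_triangle_ineq)
      also have "\<dots> \<le> t * norm k + t * norm h" using xi by (simp add: mult_right_mono)
      finally show ?thesis by (simp add: algebra_simps)
    qed
    have n2: "norm (y2 - a) \<le> t * norm h"
      unfolding y2_def using xi by (simp add: mult_right_mono)
    have n2': "t * norm h \<le> t * (norm h + norm k)" using t by simp
    have E1: "norm (gf y1 - gf a - H (y1 - a)) \<le> e * (t * (norm h + norm k))"
      using dd[of y1] n1 td e by (meson dual_order.trans le_less_trans mult_left_mono less_imp_le)
    have E2: "norm (gf y2 - gf a - H (y2 - a)) \<le> e * (t * norm h)"
      using dd[of y2] n2 n2' td e by (meson dual_order.trans le_less_trans mult_left_mono less_imp_le)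
    have lin: "H (y1 - a) - H (y2 - a) = t *\<^sub>R H k"
      unfolding y1_def y2_def by (simp add: L.add L.scaleR)
    have key: "gf y1 - gf y2 - t *\<^sub>R H k = (gf y1 - gf a - H (y1 - a)) - (gf y2 - gf a - H (y2 - a))"
      using lin by (simp add: algebra_simps)
    have "norm (gf y1 - gf y2 - t *\<^sub>R H k) \<le> e * (t * (norm h + norm k)) + e * (t * norm h)"
      unfolding key using E1 E2 norm_triangle_ineq4 by (smt (verit))
    also have "\<dots> = e * t * (2 * norm h + norm k)" by (simp add: algebra_simps)
    finally have N: "norm (gf y1 - gf y2 - t *\<^sub>R H k) \<le> e * t * (2 * norm h + norm k)" .
    have "\<bar>inner (gf y1 - gf y2 - t *\<^sub>R H k) h\<bar> \<le> norm (gf y1 - gf y2 - t *\<^sub>R H k) * norm h"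
      by (rule Cauchy_Schwarz_ineq2)
    also have "\<dots> \<le> e * t * (2 * norm h + norm k) * norm h"
      using N by (simp add: mult_right_mono)
    finally have I: "\<bar>inner (gf y1) h - inner (gf y2) h - t * inner (H k) h\<bar> \<le> e * t * (2 * norm h + norm k) * norm h"
      by (simp add: inner_diff_left)
    have eq: "f (a + t *\<^sub>R k + t *\<^sub>R h) - f (a + t *\<^sub>R h) - f (a + t *\<^sub>R k) + f a - t^2 * inner (H k) h
       = t * (inner (gf y1) h - inner (gf y2) h - t * inner (H k) h)"
      using mv unfolding \<phi>_def y1_def y2_def by (simp add: power2_eq_square algebra_simps)
    have "\<bar>t * (inner (gf y1) h - inner (gf y2) h - t * inner (H k) h)\<bar> \<le> t * (e * t * (2 * norm h + norm k) * norm h)"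
      using I t by (simp add: abs_mult mult_left_mono)
    then show "\<bar>f (a + t *\<^sub>R k + t *\<^sub>R h) - f (a + t *\<^sub>R h) - f (a + t *\<^sub>R k) + f a - t^2 * inner (H k) h\<bar>
       \<le> e * (norm h * (2*norm h + norm k)) * t^2"
      unfolding eq by (simp add: power2_eq_square algebra_simps)
  qed
qed

lemma hess_sym:
  fixes f :: "'a::real_inner \<Rightarrow> real"
  assumes grad: "\<And>z. (f has_derivative (\<lambda>h. inner (gf z) h)) (at z)"
    and hess: "(gf has_derivative H) (at a)"
  shows "inner (H k) h = inner (H h) k"
proof (rule ccontr)
  assume ne: "inner (H k) h \<noteq> inner (H h) k"
  define C where "C = norm h * (2*norm h + norm k) + norm k * (2*norm k + norm h)"
  have C0: "C \<ge> 0" unfolding C_def by simp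
  define e where "e = \<bar>inner (H k) h - inner (H h) k\<bar> / (2 * (C + 1))"
  have e: "e > 0" using ne C0 unfolding e_def by simp
  obtain d1 where d1: "d1 > 0" and D1: "\<And>t. 0<t \<and> t<d1 \<Longrightarrow>
     \<bar>f (a + t *\<^sub>R k + t *\<^sub>R h) - f (a + t *\<^sub>R h) - f (a + t *\<^sub>R k) + f a - t^2 * inner (H k) h\<bar>
       \<le> e * (norm h * (2*norm h + norm k)) * t^2"
    using hess_sym_aux[OF grad hess e, of k h] by blast
  obtain d2 where d2: "d2 > 0" and D2: "\<And>t. 0<t \<and> t<d2 \<Longrightarrow>
     \<bar>f (a + t *\<^sub>R h + t *\<^sub>R k) - f (a + t *\<^sub>R k) - f (a + t *\<^sub>R h) + f a - t^2 * inner (H h) k\<bar>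
       \<le> e * (norm k * (2*norm k + norm h)) * t^2"
    using hess_sym_aux[OF grad hess e, of h k] by blast
  define t where "t = min d1 d2 / 2"
  have t: "0 < t" "t < d1" "t < d2" using d1 d2 unfolding t_def by auto
  have sw: "a + t *\<^sub>R h + t *\<^sub>R k = a + t *\<^sub>R k + t *\<^sub>R h" by (simp add: algebra_simps)
  have "\<bar>t^2 * inner (H k) h - t^2 * inner (H h) k\<bar> \<le> e * (norm h * (2*norm h + norm k)) * t^2 + e * (norm k * (2*norm k + norm h)) * t^2"
    using D1[of t] D2[of t] t unfolding sw by linarith
  also have "\<dots> = t^2 * (e * C)" unfolding C_def by (simp add: algebra_simps)
  finally have "t^2 * \<bar>inner (H k) h - inner (H h) k\<bar> \<le> t^2 * (e * C)"
    by (simp add: abs_mult right_diff_distrib[symmetric])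
  then have A: "\<bar>inner (H k) h - inner (H h) k\<bar> \<le> e * C" using t by simp
  have "e * C \<le> e * (C + 1)" using e by simp
  also have "\<dots> = \<bar>inner (H k) h - inner (H h) k\<bar> / 2" unfolding e_def using C0 by (simp add: field_simps)
  finally show False using A ne by simp
qed



lemma norm_cube_deriv:
  fixes x :: "'a::real_inner"
  shows "((\<lambda>x. norm x ^ 3) has_derivative (\<lambda>h. 3 * norm x * inner x h)) (at x)"
proof (cases "x = 0")
  case False
  have e: "(\<lambda>y. norm y ^ 3) = (\<lambda>y. norm y * inner y y)"
    by (simp add: fun_eq_iff power2_norm_eq_inner[symmetric] power3_eq_cube power2_eq_square)
  have "((\<lambda>y. norm y * inner y y) has_derivative
     (\<lambda>h. norm x * (inner h x + inner x h) + inner (sgn x) h * inner x x)) (at x)"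
  proof (rule has_derivative_mult)
    show "(norm has_derivative (\<lambda>h. inner (sgn x) h)) (at x)"
      using has_derivative_norm[OF False] by (simp add: inner_commute)
    show "((\<lambda>x. x \<bullet> x) has_derivative (\<lambda>h. h \<bullet> x + x \<bullet> h)) (at x)"
      using has_derivative_inner[OF has_derivative_ident has_derivative_ident, of x UNIV] by (simp add: add.commute)
  qed
  moreover have "(\<lambda>h. norm x * (inner h x + inner x h) + inner (sgn x) h * inner x x) = (\<lambda>h. 3 * norm x * inner x h)"
    using False by (simp add: fun_eq_iff sgn_div_norm inner_commute power2_norm_eq_inner[symmetric] power2_eq_square field_simps)
  ultimately show ?thesis unfolding e by simp
next
  case True
  have l: "((\<lambda>h::'a. norm h ^ 2) \<longlongrightarrow> 0) (at 0)"
    using tendsto_power[OF tendsto_norm[OF tendsto_ident_at], of 2 0 UNIV] by simp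
  have "((\<lambda>h::'a. norm (norm (0 + h) ^ 3 - norm 0 ^ 3 - 0) / norm h) \<longlongrightarrow> 0) (at 0)"
  proof -
    have ev: "\<forall>\<^sub>F h in at (0::'a). norm h ^ 2 = norm (norm (0 + h) ^ 3 - norm (0::'a) ^ 3 - 0) / norm h"
      by (rule always_eventually) (simp add: power2_eq_square power3_eq_cube)
    show ?thesis using Lim_transform_eventually[OF l ev] by simp
  qed
  then show ?thesis using True by (simp add: has_derivative_at)
qed

lemma foc_x:
  fixes H :: "'a::euclidean_space \<times> 'b::euclidean_space \<Rightarrow> 'a \<times> 'b"
  assumes lin: "bounded_linear H" and sym: "\<And>p q. inner (H p) q = inner (H q) p"
    and sp: "saddle_point (cubic_model f gf H zk \<gamma>) (fst zk + u) (snd zk + v)"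
  shows "inner (gf zk + H (u,v)) (h, 0) + \<gamma> * norm u * inner u h = 0"
proof -
  interpret L: bounded_linear H by (rule lin)
  define P where "P = (\<lambda>x. cubic_model f gf H zk \<gamma> x (snd zk + v))"
  have P: "P = (\<lambda>x. f zk + inner (gf zk) (x - fst zk, v) + 1/2 * inner (x - fst zk, v) (H (x - fst zk, v))
       + \<gamma> / 3 * norm (x - fst zk) ^ 3 - \<gamma> / 3 * norm v ^ 3)"
    unfolding P_def cubic_model_def Let_def by simp
  have pd: "((\<lambda>x. (x - fst zk, v)) has_derivative (\<lambda>h. (h, 0))) (at (fst zk + u))"
    by (intro derivative_eq_intros) auto
  have nd: "((\<lambda>x. norm (x - fst zk) ^ 3) has_derivative (\<lambda>h. 3 * norm u * inner u h)) (at (fst zk + u))"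
  proof -
    have d1: "((\<lambda>x. x - fst zk) has_derivative (\<lambda>h. h)) (at (fst zk + u))"
      by (intro derivative_eq_intros) auto
    have d2: "((\<lambda>x. norm x ^ 3) has_derivative (\<lambda>h. 3 * norm u * inner u h)) (at ((\<lambda>x. x - fst zk) (fst zk + u)))"
      using norm_cube_deriv[of u] by simp
    show ?thesis using has_derivative_compose[OF d1 d2] by simp
  qed
  have Hd: "((\<lambda>x. H (x - fst zk, v)) has_derivative (\<lambda>h. H (h, 0))) (at (fst zk + u))"
    using L.has_derivative[OF pd] .
  have q: "((\<lambda>x. inner (x - fst zk, v) (H (x - fst zk, v))) has_derivative (\<lambda>h. inner (h,0) (H (u,v)) + inner (u,v) (H (h,0)))) (at (fst zk + u))"
    using has_derivative_inner[OF pd Hd] by (simp add: add.commute)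
  have "(P has_derivative (\<lambda>h. f zk + inner (gf zk) (h, 0) + 1/2 * (inner (h,0) (H (u,v)) + inner (u,v) (H (h,0)))
      + \<gamma>/3 * (3 * norm u * inner u h) - \<gamma> / 3 * norm v ^ 3 - f zk + \<gamma> / 3 * norm v ^ 3)) (at (fst zk + u))"
  proof -
    have "(P has_derivative (\<lambda>h. 0 + inner (gf zk) (h, 0) + 1/2 * (inner (h,0) (H (u,v)) + inner (u,v) (H (h,0)))
      + \<gamma>/3 * (3 * norm u * inner u h) - 0)) (at (fst zk + u))"
      unfolding P by (intro has_derivative_diff has_derivative_add has_derivative_const has_derivative_mult_right
        has_derivative_inner_right[OF pd] q nd)
    then show ?thesis by (simp add: add.assoc)
  qed
  moreover have "eventually (\<lambda>x. P (fst zk + u) \<le> P x) (at (fst zk + u))"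
    using sp unfolding saddle_point_def P_def by (intro always_eventually) auto
  ultimately have "(\<lambda>h. f zk + inner (gf zk) (h, 0) + 1/2 * (inner (h,0) (H (u,v)) + inner (u,v) (H (h,0)))
      + \<gamma>/3 * (3 * norm u * inner u h) - \<gamma> / 3 * norm v ^ 3 - f zk + \<gamma> / 3 * norm v ^ 3) = (\<lambda>h. 0)"
    by (rule has_derivative_local_min)
  then have "inner (gf zk) (h, 0) + 1/2 * (inner (h,0) (H (u,v)) + inner (u,v) (H (h,0))) + \<gamma> * norm u * inner u h = 0"
    by (simp add: fun_eq_iff add.assoc mult.assoc)
  moreover have "inner (h,0) (H (u,v)) = inner (H (u,v)) (h,0)" by (simp add: inner_commute)
  moreover have "inner (u,v) (H (h,0)) = inner (H (u,v)) (h,0)" using sym by (simp add: inner_commute)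
  ultimately show ?thesis by (simp add: inner_add_left)
qed

lemma foc_y:
  fixes H :: "'a::euclidean_space \<times> 'b::euclidean_space \<Rightarrow> 'a \<times> 'b"
  assumes lin: "bounded_linear H" and sym: "\<And>p q. inner (H p) q = inner (H q) p"
    and sp: "saddle_point (cubic_model f gf H zk \<gamma>) (fst zk + u) (snd zk + v)"
  shows "inner (gf zk + H (u,v)) (0, h) - \<gamma> * norm v * inner v h = 0"
proof -
  interpret L: bounded_linear H by (rule lin)
  define P where "P = (\<lambda>y. cubic_model f gf H zk \<gamma> (fst zk + u) y)"
  have P: "P = (\<lambda>y. f zk + inner (gf zk) (u, y - snd zk) + 1/2 * inner (u, y - snd zk) (H (u, y - snd zk))
       + \<gamma> / 3 * norm u ^ 3 - \<gamma> / 3 * norm (y - snd zk) ^ 3)"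
    unfolding P_def cubic_model_def Let_def by simp
  have pd: "((\<lambda>y. (u, y - snd zk)) has_derivative (\<lambda>h. (0, h))) (at (snd zk + v))"
    by (intro derivative_eq_intros) auto
  have nd: "((\<lambda>y. norm (y - snd zk) ^ 3) has_derivative (\<lambda>h. 3 * norm v * inner v h)) (at (snd zk + v))"
  proof -
    have d1: "((\<lambda>y. y - snd zk) has_derivative (\<lambda>h. h)) (at (snd zk + v))"
      by (intro derivative_eq_intros) auto
    have d2: "((\<lambda>x. norm x ^ 3) has_derivative (\<lambda>h. 3 * norm v * inner v h)) (at ((\<lambda>y. y - snd zk) (snd zk + v)))"
      using norm_cube_deriv[of v] by simp
    show ?thesis using has_derivative_compose[OF d1 d2] by simp
  qed
  have Hd: "((\<lambda>y. H (u, y - snd zk)) has_derivative (\<lambda>h. H (0, h))) (at (snd zk + v))"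
    using L.has_derivative[OF pd] .
  have q: "((\<lambda>y. inner (u, y - snd zk) (H (u, y - snd zk))) has_derivative (\<lambda>h. inner (0,h) (H (u,v)) + inner (u,v) (H (0,h)))) (at (snd zk + v))"
    using has_derivative_inner[OF pd Hd] by (simp add: add.commute)
  have "(P has_derivative (\<lambda>h. f zk + inner (gf zk) (0, h) + 1/2 * (inner (0,h) (H (u,v)) + inner (u,v) (H (0,h)))
      + \<gamma> / 3 * norm u ^ 3 - \<gamma>/3 * (3 * norm v * inner v h) - f zk - \<gamma> / 3 * norm u ^ 3)) (at (snd zk + v))"
  proof -
    have "(P has_derivative (\<lambda>h. 0 + inner (gf zk) (0, h) + 1/2 * (inner (0,h) (H (u,v)) + inner (u,v) (H (0,h)))
      + 0 - \<gamma>/3 * (3 * norm v * inner v h))) (at (snd zk + v))"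
      unfolding P by (intro has_derivative_diff has_derivative_add has_derivative_const has_derivative_mult_right
        has_derivative_inner_right[OF pd] q nd)
    then show ?thesis by (simp add: add.assoc add_diff_eq)
  qed
  moreover have "eventually (\<lambda>x. P x \<le> P (snd zk + v)) (at (snd zk + v))"
    using sp unfolding saddle_point_def P_def by (intro always_eventually) auto
  ultimately have "(\<lambda>h. f zk + inner (gf zk) (0, h) + 1/2 * (inner (0,h) (H (u,v)) + inner (u,v) (H (0,h)))
      + \<gamma> / 3 * norm u ^ 3 - \<gamma>/3 * (3 * norm v * inner v h) - f zk - \<gamma> / 3 * norm u ^ 3) = (\<lambda>h. 0)"
    by (rule has_derivative_local_max)
  then have "inner (gf zk) (0, h) + 1/2 * (inner (0,h) (H (u,v)) + inner (u,v) (H (0,h))) - \<gamma> * norm v * inner v h = 0"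
    proof -
    assume a: "(\<lambda>h. f zk + inner (gf zk) (0, h) + 1/2 * (inner (0,h) (H (u,v)) + inner (u,v) (H (0,h)))
      + \<gamma> / 3 * norm u ^ 3 - \<gamma>/3 * (3 * norm v * inner v h) - f zk - \<gamma> / 3 * norm u ^ 3) = (\<lambda>h. 0)"
    show ?thesis using fun_cong[OF a, of h] by simp
  qed
  moreover have "inner (0,h) (H (u,v)) = inner (H (u,v)) (0,h)" by (simp add: inner_commute)
  moreover have "inner (u,v) (H (0,h)) = inner (H (u,v)) (0,h)" using sym by (simp add: inner_commute)
  ultimately show ?thesis by (simp add: inner_add_left)
qed



lemma final_ineq:
  fixes t m b :: real
  assumes "m \<le> t" "0 \<le> m" "0 \<le> b" "b \<le> m/2"
  shows "b * t - t^2 \<le> - (m^2/2)"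
proof -
  have "b * t \<le> m/2 * t" using assms by (intro mult_right_mono) auto
  moreover have "0 \<le> (t - m) * (t + m/2)" using assms by simp
  moreover have "(t - m) * (t + m/2) = t*t - m/2*t - m*m/2" by (simp add: field_simps)
  ultimately show ?thesis unfolding power2_eq_square by linarith
qed

theorem proposition3p3:
  fixes f :: "(real^'n::finite) \<times> (real^'m::finite) \<Rightarrow> real"
    and gf :: "(real^'n::finite) \<times> (real^'m::finite) \<Rightarrow> (real^'n) \<times> (real^'m)"
    and Hf :: "(real^'n::finite) \<times> (real^'m::finite) \<Rightarrow> ((real^'n) \<times> (real^'m)) \<Rightarrow>\<^sub>L ((real^'n) \<times> (real^'m))"
    and \<mu> L L2 :: real
    and zk :: "(real^'n::finite) \<times> (real^'m::finite)"
  assumes mu_pos: "\<mu> > 0"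
    and grad: "\<And>z. (f has_derivative (\<lambda>h. inner (gf z) h)) (at z)"
    and hess: "\<And>z. (gf has_derivative blinfun_apply (Hf z)) (at z)"
    and hess_cont: "continuous_on UNIV Hf"
    and sconvex_x: "\<And>y. strongly_convex \<mu> (\<lambda>x. f (x, y))"
    and sconcave_y: "\<And>x. strongly_convex \<mu> (\<lambda>y. - f (x, y))"
    and JF_bound: "\<And>z. onorm (\<lambda>d. (fst (Hf z d), - snd (Hf z d))) \<le> L"
    and JF_lipschitz: "\<And>z z'. onorm (\<lambda>d. (fst (Hf z d), - snd (Hf z d)) - (fst (Hf z' d), - snd (Hf z' d)))
                                \<le> L2 * norm (z - z')"
  shows "\<exists>\<gamma>0 > 0. \<forall>\<gamma>. 0 < \<gamma> \<and> \<gamma> < \<gamma>0 \<longrightarrow>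
           (\<forall>u v. saddle_point (cubic_model f gf (blinfun_apply (Hf zk)) zk \<gamma>) (fst zk + u) (snd zk + v) \<longrightarrow>
              \<gamma> * (norm u + norm v) < \<mu> \<and>
              (\<exists>gm. ((\<lambda>z. 1/2 * (norm (opF gf z))\<^sup>2) has_derivative (\<lambda>h. inner gm h)) (at zk) \<and>
                    inner gm (u, v) \<le> - (\<mu>\<^sup>2 / 2) * (norm (u, v))\<^sup>2))"
proof -
  define H where "H = blinfun_apply (Hf zk)"
  define g where "g = gf zk"
  obtain x0 y0 where zk: "zk = (x0, y0)" by (cases zk)
  have lin: "bounded_linear H" unfolding H_def by (rule blinfun.bounded_linear_right)
  interpret L: bounded_linear H by (rule lin)
  have sym: "\<And>p q. inner (H p) q = inner (H q) p"
    unfolding H_def by (rule hess_sym[OF grad hess])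
  have S1: "\<And>u. \<mu> * (norm u)^2 \<le> inner (fst (H (u, 0))) u"
  proof -
    fix u :: "real^'n"
    have d: "\<And>x. ((\<lambda>x. f (x, y0)) has_derivative (\<lambda>h. inner (fst (gf (x, y0))) h)) (at x)"
    proof -
      fix x :: "real^'n"
      have p: "((\<lambda>x. (x, y0)) has_derivative (\<lambda>h. (h, 0))) (at x)"
        by (intro derivative_eq_intros) auto
      have "((\<lambda>x. f (x, y0)) has_derivative (\<lambda>h. inner (gf (x, y0)) (h, 0))) (at x)"
        using has_derivative_compose[OF p grad] by simp
      then show "((\<lambda>x. f (x, y0)) has_derivative (\<lambda>h. inner (fst (gf (x, y0))) h)) (at x)"
        by (simp add: inner_Pair_0)
    qed
    have p: "((\<lambda>x. (x, y0)) has_derivative (\<lambda>h. (h, 0))) (at x0)"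
      by (intro derivative_eq_intros) auto
    have "((\<lambda>x. gf (x, y0)) has_derivative (\<lambda>h. H (h, 0))) (at x0)"
      using has_derivative_compose[OF p hess[of "(x0, y0)"]] unfolding H_def zk by simp
    then have d2: "((\<lambda>x. fst (gf (x, y0))) has_derivative (\<lambda>h. fst (H (h, 0)))) (at x0)"
      by (rule has_derivative_fst)
    show "\<mu> * (norm u)^2 \<le> inner (fst (H (u, 0))) u"
      by (rule sc_second[OF sconvex_x d d2])
  qed
  have S2: "\<And>v. \<mu> * (norm v)^2 \<le> inner (- snd (H (0, v))) v"
  proof -
    fix v :: "real^'m"
    have d: "\<And>y. ((\<lambda>y. - f (x0, y)) has_derivative (\<lambda>h. inner (- snd (gf (x0, y))) h)) (at y)"
    proof -
      fix y :: "real^'m"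
      have p: "((\<lambda>y. (x0, y)) has_derivative (\<lambda>h. (0, h))) (at y)"
        by (intro derivative_eq_intros) auto
      have "((\<lambda>y. f (x0, y)) has_derivative (\<lambda>h. inner (gf (x0, y)) (0, h))) (at y)"
        using has_derivative_compose[OF p grad] by simp
      then have "((\<lambda>y. - f (x0, y)) has_derivative (\<lambda>h. - inner (gf (x0, y)) (0, h))) (at y)"
        by (rule has_derivative_minus)
      then show "((\<lambda>y. - f (x0, y)) has_derivative (\<lambda>h. inner (- snd (gf (x0, y))) h)) (at y)"
        by (simp add: inner_Pair_0)
    qed
    have p: "((\<lambda>y. (x0, y)) has_derivative (\<lambda>h. (0, h))) (at y0)"
      by (intro derivative_eq_intros) auto
    have "((\<lambda>y. gf (x0, y)) has_derivative (\<lambda>h. H (0, h))) (at y0)"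
      using has_derivative_compose[OF p hess[of "(x0, y0)"]] unfolding H_def zk by simp
    then have "((\<lambda>y. snd (gf (x0, y))) has_derivative (\<lambda>h. snd (H (0, h)))) (at y0)"
      by (rule has_derivative_snd)
    then have d2: "((\<lambda>y. - snd (gf (x0, y))) has_derivative (\<lambda>h. - snd (H (0, h)))) (at y0)"
      by (rule has_derivative_minus)
    show "\<mu> * (norm v)^2 \<le> inner (- snd (H (0, v))) v"
      by (rule sc_second[OF sconcave_y d d2])
  qed
  define \<gamma>0 where "\<gamma>0 = \<mu>^2 / (8 * norm g + 1)"
  have g0: "\<gamma>0 > 0" unfolding \<gamma>0_def using mu_pos by (simp add: add_nonneg_pos)
  show ?thesis
  proof (intro exI[of _ \<gamma>0] conjI g0 allI impI)
    fix \<gamma> u v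
    assume \<gamma>: "0 < \<gamma> \<and> \<gamma> < \<gamma>0"
    assume sp0: "saddle_point (cubic_model f gf (blinfun_apply (Hf zk)) zk \<gamma>) (fst zk + u) (snd zk + v)"
    then have sp: "saddle_point (cubic_model f gf H zk \<gamma>) (fst zk + u) (snd zk + v)" unfolding H_def .
    obtain g1 g2 where gg: "g = (g1, g2)" by (cases g)
    have m1: "cubic_model f gf H zk \<gamma> (fst zk + u) (snd zk) \<le> cubic_model f gf H zk \<gamma> (fst zk + u) (snd zk + v)"
      and m2: "cubic_model f gf H zk \<gamma> (fst zk + u) (snd zk + v) \<le> cubic_model f gf H zk \<gamma> (fst zk) (snd zk + v)"
      using sp unfolding saddle_point_def by auto
    have e1: "cubic_model f gf H zk \<gamma> (fst zk + u) (snd zk) = f zk + inner g (u,0) + 1/2 * inner (u,0) (H (u,0)) + \<gamma>/3 * norm u ^ 3"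
      unfolding cubic_model_def Let_def g_def by simp
    have e2: "cubic_model f gf H zk \<gamma> (fst zk) (snd zk + v) = f zk + inner g (0,v) + 1/2 * inner (0,v) (H (0,v)) - \<gamma>/3 * norm v ^ 3"
      unfolding cubic_model_def Let_def g_def by simp
    have q1: "inner (u,0) (H (u,0)) = inner (fst (H (u,0))) u" by (cases "H (u,0)") (simp add: inner_commute)
    have q2: "inner (0,v) (H (0,v)) = - inner (- snd (H (0,v))) v" by (cases "H (0,v)") (simp add: inner_commute)
    have c1: "\<gamma>/3 * norm u ^ 3 \<ge> 0" "\<gamma>/3 * norm v ^ 3 \<ge> 0" using \<gamma> by auto
    have "inner g (u,0) + \<mu>/2 * (norm u)^2 \<le> inner g (0,v) - \<mu>/2 * (norm v)^2"
      using m1 m2 e1 e2 q1 q2 c1 S1[of u] S2[of v] by linarith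
    then have "\<mu>/2 * ((norm u)^2 + (norm v)^2) \<le> inner g (-u, v)"
      unfolding gg by (simp add: algebra_simps)
    also have "\<dots> \<le> norm g * norm (-u, v)" by (rule norm_cauchy_schwarz)
    also have "norm (-u, v) = norm (u, v)" by (simp add: norm_Pair)
    finally have B0: "\<mu>/2 * (norm (u,v))^2 \<le> norm g * norm (u,v)" by (simp add: norm_Pair)
    have B1: "\<mu> * norm (u,v) \<le> 2 * norm g"
    proof (cases "norm (u,v) = 0")
      case True then show ?thesis by simp
    next
      case False
      then have pos: "norm (u,v) > 0" by simp
      have "norm (u,v) * (\<mu> * norm (u,v)) \<le> norm (u,v) * (2 * norm g)"
        using B0 by (simp add: power2_eq_square algebra_simps)
      then show ?thesis using pos mult_le_cancel_left_pos by blast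
    qed
    have B2: "\<mu> * (norm u + norm v) \<le> 4 * norm g"
    proof -
      have "\<mu> * norm u \<le> \<mu> * norm (u,v)" using mu_pos norm_fst_le by (simp add: mult_left_mono)
      moreover have "\<mu> * norm v \<le> \<mu> * norm (u,v)" using mu_pos norm_snd_le by (simp add: mult_left_mono)
      ultimately show ?thesis using B1 by (simp add: distrib_left)
    qed
    define a where "a = \<gamma> * (norm u + norm v)"
    have a0: "a \<ge> 0" unfolding a_def using \<gamma> by simp
    have ab: "a \<le> \<mu>/2"
    proof -
      have "\<mu> * a \<le> \<mu> * (\<gamma>0 * (norm u + norm v))"
        unfolding a_def using \<gamma> mu_pos by (intro mult_left_mono mult_right_mono) auto
      also have "\<dots> = \<gamma>0 * (\<mu> * (norm u + norm v))" by simp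
      also have "\<dots> \<le> \<gamma>0 * (4 * norm g)" using B2 g0 by (intro mult_left_mono) auto
      also have "\<dots> = \<mu>^2 * (4 * norm g) / (8 * norm g + 1)" unfolding \<gamma>0_def by simp
      also have "\<dots> \<le> \<mu>^2 / 2"
      proof -
        have pos: "8 * norm g + 1 > 0" by (simp add: add_nonneg_pos)
        have "4 * norm g \<le> (8 * norm g + 1) / 2" by simp
        then have "\<mu>^2 * (4 * norm g) \<le> \<mu>^2 * ((8 * norm g + 1) / 2)" by (intro mult_left_mono) auto
        also have "\<dots> = \<mu>^2 / 2 * (8 * norm g + 1)" by simp
        finally show ?thesis using pos by (simp add: divide_le_eq)
      qed
      also have "\<dots> = \<mu> * (\<mu>/2)" by (simp add: power2_eq_square)
      finally show ?thesis using mu_pos mult_le_cancel_left_pos by blast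
    qed
    show "\<gamma> * (norm u + norm v) < \<mu>" using ab mu_pos unfolding a_def by simp
    show "\<exists>gm. ((\<lambda>z. 1/2 * (norm (opF gf z))\<^sup>2) has_derivative (\<lambda>h. inner gm h)) (at zk) \<and>
                    inner gm (u, v) \<le> - (\<mu>\<^sup>2 / 2) * (norm (u, v))\<^sup>2"
    proof -
      obtain p1 p2 where Hd: "H (u, v) = (p1, p2)" by (cases "H (u, v)")
      have fx: "inner (gf zk + H (u,v)) (p1, 0) + \<gamma> * norm u * inner u p1 = 0"
        by (rule foc_x[OF lin sym sp])
      have fy: "inner (gf zk + H (u,v)) (0, p2) - \<gamma> * norm v * inner v p2 = 0"
        by (rule foc_y[OF lin sym sp])
      define W where "W = \<gamma> * norm u * inner u p1 - \<gamma> * norm v * inner v p2"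
      define T where "T = norm (p1, p2)"
      have T2: "T^2 = inner p1 p1 + inner p2 p2"
        unfolding T_def by (simp add: norm_Pair power2_norm_eq_inner)
      have G: "inner g1 p1 + inner g2 p2 = - (T^2) - W"
      proof -
        have a1: "inner g1 p1 + inner p1 p1 + \<gamma> * norm u * inner u p1 = 0"
          using fx unfolding g_def[symmetric] gg Hd by (simp add: inner_add_left)
        have a2: "inner g2 p2 + inner p2 p2 - \<gamma> * norm v * inner v p2 = 0"
          using fy unfolding g_def[symmetric] gg Hd by (simp add: inner_add_left)
        show ?thesis using a1 a2 T2 unfolding W_def by linarith
      qed
      define w where "w = ((\<gamma> * norm u) *\<^sub>R u, - (\<gamma> * norm v) *\<^sub>R v)"
      have Ww: "W = inner w (p1, p2)" unfolding W_def w_def by simp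
      have wn: "norm w \<le> a * norm (u, v)"
      proof -
        have au: "\<gamma> * norm u \<le> a" and av: "\<gamma> * norm v \<le> a" unfolding a_def using \<gamma> by (auto simp: distrib_left)
        have "(norm w)^2 = (\<gamma> * norm u)^2 * (norm u)^2 + (\<gamma> * norm v)^2 * (norm v)^2"
          unfolding w_def using \<gamma> by (simp add: norm_Pair power_mult_distrib)
        also have "\<dots> \<le> a^2 * (norm u)^2 + a^2 * (norm v)^2"
          using au av \<gamma> by (intro add_mono mult_right_mono power_mono) auto
        also have "\<dots> = (a * norm (u, v))^2"
        proof -
          have nn: "(norm (u,v))^2 = (norm u)^2 + (norm v)^2" by (simp add: norm_Pair)
          show ?thesis unfolding power_mult_distrib[of a] nn by (simp add: distrib_left)
        qed
        finally have sq: "(norm w)^2 \<le> (a * norm (u, v))^2" .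
        have "0 \<le> a * norm (u, v)" using a0 by simp
        then show ?thesis using sq by (rule power2_le_imp_le[rotated])
      qed
      have WT: "- W \<le> a * norm (u, v) * T"
      proof -
        have "- W \<le> norm w * norm (p1, p2)" unfolding Ww
          using norm_cauchy_schwarz[of "- w" "(p1, p2)"] by simp
        also have "\<dots> \<le> a * norm (u, v) * T" unfolding T_def using wn by (intro mult_right_mono) auto
        finally show ?thesis .
      qed
      have Jd: "\<mu> * (norm (u, v))^2 \<le> inner p1 u - inner p2 v"
      proof -
        have sp2: "H (u, v) = H (u, 0) + H (0, v)" using L.add[of "(u,0)" "(0,v)"] by simp
        have p1: "p1 = fst (H (u,0)) + fst (H (0,v))" and p2: "p2 = snd (H (u,0)) + snd (H (0,v))"
          using arg_cong[OF sp2, of fst] arg_cong[OF sp2, of snd] Hd by simp_all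
        have sy: "inner (fst (H (0,v))) u = inner (snd (H (u,0))) v"
          using sym[of "(0,v)" "(u,0)"] by (simp add: inner_Pair_0)
        have "inner p1 u - inner p2 v = inner (fst (H (u,0))) u + inner (- snd (H (0,v))) v"
          unfolding p1 p2 using sy by (simp add: inner_add_left)
        moreover have "(norm (u, v))^2 = (norm u)^2 + (norm v)^2" by (simp add: norm_Pair)
        ultimately show ?thesis using S1[of u] S2[of v] by (simp add: distrib_left)
      qed
      have "inner p1 u - inner p2 v = inner (p1, - p2) (u, v)" by simp
      also have "\<dots> \<le> norm (p1, - p2) * norm (u, v)" by (rule norm_cauchy_schwarz)
      also have "norm (p1, - p2) = T" unfolding T_def by (simp add: norm_Pair)
      finally have "\<mu> * (norm (u, v))^2 \<le> T * norm (u, v)" using Jd by linarith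
      then have MT: "\<mu> * norm (u, v) \<le> T"
      proof (cases "norm (u,v) = 0")
        case True then show ?thesis by (simp add: T_def)
      next
        case False
        then have pos: "norm (u,v) > 0" by simp
        assume "\<mu> * (norm (u, v))^2 \<le> T * norm (u, v)"
        then have "norm (u,v) * (\<mu> * norm (u,v)) \<le> norm (u,v) * T" by (simp add: power2_eq_square algebra_simps)
        then show ?thesis using pos mult_le_cancel_left_pos by blast
      qed
      have fin: "a * norm (u, v) * T - T^2 \<le> - ((\<mu> * norm (u, v))^2 / 2)"
      proof (rule final_ineq[OF MT])
        show "0 \<le> \<mu> * norm (u, v)" using mu_pos by simp
        show "0 \<le> a * norm (u, v)" using a0 by simp
        have "a * norm (u, v) \<le> \<mu>/2 * norm (u, v)" by (rule mult_right_mono[OF ab]) simp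
        then show "a * norm (u, v) \<le> \<mu> * norm (u, v) / 2" by simp
      qed
      have G2: "inner g1 p1 + inner g2 p2 \<le> - (\<mu>\<^sup>2 / 2) * (norm (u, v))\<^sup>2"
        using G WT fin by (simp add: power_mult_distrib)
      define J where "J = (\<lambda>h. (fst (H h), - snd (H h)))"
      have dF: "(opF gf has_derivative J) (at zk)"
        unfolding opF_def J_def H_def
        by (intro has_derivative_Pair has_derivative_fst has_derivative_snd has_derivative_minus hess)
      have linJ: "linear J" using has_derivative_bounded_linear[OF dF] bounded_linear.linear by blast
      define F where "F = opF gf zk"
      have F: "F = (g1, - g2)" unfolding F_def opF_def g_def[symmetric] gg by simp
      define gm where "gm = adjoint J F"
      have gmh: "\<And>h. inner gm h = inner (J h) F"
        unfolding gm_def using adjoint_works[OF linJ] by (simp add: inner_commute)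
      have "((\<lambda>z. 1/2 * inner (opF gf z) (opF gf z)) has_derivative (\<lambda>h. 1/2 * (inner F (J h) + inner (J h) F))) (at zk)"
        unfolding F_def by (intro has_derivative_mult_right has_derivative_inner dF)
      moreover have "(\<lambda>z. 1/2 * inner (opF gf z) (opF gf z)) = (\<lambda>z. 1/2 * (norm (opF gf z))\<^sup>2)"
        by (simp add: power2_norm_eq_inner)
      moreover have "(\<lambda>h. 1/2 * (inner F (J h) + inner (J h) F)) = (\<lambda>h. inner gm h)"
        by (simp add: fun_eq_iff gmh inner_commute)
      ultimately have D: "((\<lambda>z. 1/2 * (norm (opF gf z))\<^sup>2) has_derivative (\<lambda>h. inner gm h)) (at zk)" by simp
      have "inner gm (u, v) = inner g1 p1 + inner g2 p2"
        unfolding gmh J_def F Hd by (simp add: inner_commute)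
      then have "inner gm (u, v) \<le> - (\<mu>\<^sup>2 / 2) * (norm (u, v))\<^sup>2" using G2 by simp
      then show ?thesis using D by blast
    qed
  qed
qed

end
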